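(* In the one-vs-all multi-class setting, let $\hat c$ be the clean predicted class of test node $t$. For each $c\in[K]$ let $P^c$ denote the feasible set of the sample-wise MILP constraints (with binary labels $\mathbf{y}^c$ in place of $\mathbf{y}$ and budget $\lfloor\epsilon m\rfloor$, big-M values $M_{u_i}=\sum_jC|Q_{ij}|-1$, $M_{v_i}=\sum_jC|Q_{ij}|+1$), namely variables $\boldsymbol{\alpha},\tilde{\mathbf{y}},\mathbf{z},\mathbf{u},\mathbf{v}\in\mathbb{R}^m$, $\mathbf{y}',\mathbf{s},\mathbf{t}\in\{0,1\}^m$, $\mathbf{R}\in\mathbb{R}^{m\times m}$ with $\sum_i(1-y^c_i\tilde y_i)\le2\lfloor\epsilon m\rfloor$ and for all $i,j$: $\tilde y_i=2y_i'-1$, $\sum_jR_{ij}Q_{ij}-1-u_i+v_i=0$, $u_i,v_i\ge0$, $-C(1+\tilde y_i)\le R_{ij}+z_j\le C(1+\tilde y_i)$, $-C(1-\tilde y_i)\le R_{ij}-z_j\le C(1-\tilde y_i)$, $-\alpha_i\le z_i\le\alpha_i$, $\alpha_i-C(1-\tilde y_i)\le z_i\le C(1+\tilde y_i)-\alpha_i$, $u_i\le M_{u_i}s_i$, $\alpha_i\le C(1-s_i)$, $v_i\le M_{v_i}t_i$, $\alpha_i\ge Ct_i$. Let $m_{\hat c}=\min_{P^{\hat c}}\sum_iz_iQ_{ti}$ and, for $c\ne\hat c$, $M_c=\max_{P^c}\sum_iz_iQ_{ti}$. If $m_{\hat c}>\max_{c\ne\hat c}M_c$, then the prediction for $t$ is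 certifiably robust, i.e. $p_{\hat c}(\tilde{\mathbf{y}})-\max_{c\ne\hat c}p_c(\tilde{\mathbf{y}})>0$ for all $\tilde{\mathbf{y}}\in\mathcal{A}(\mathbf{y})$.
   Context: Setting: $K$ classes, $m$ labeled nodes, $C>0$, symmetric positive semidefinite kernel $\mathbf{Q}$ on labeled nodes and kernel values $Q_{ti}$ of test node $t$. For $\mathbf{w}\in\{-1,1\}^m$ the bias-free SVM dual is $\min_{\boldsymbol\alpha}-\sum_i\alpha_i+\tfrac12\sum_{i,j}w_iw_j\alpha_i\alpha_jQ_{ij}$ s.t. $0\le\alpha_i\le C$, with solution set $\mathcal{S}(\mathbf{w})$. For $\tilde{\mathbf{y}}\in[K]^m$, $\tilde{\mathbf{y}}^c\in\{-1,1\}^m$ has $\tilde y^c_i=1$ iff $\tilde y_i=c$, and $p_c(\tilde{\mathbf{y}})=\sum_i\tilde y^c_i\alpha^c_iQ_{ti}$ for $\boldsymbol\alpha^c\in\mathcal{S}(\tilde{\mathbf{y}}^c)$; the predicted class is $\arg\max_cp_c$. $\mathbf{y}^c$ is defined analogously from the clean labels $\mathbf{y}\in[K]^m$. $\mathcal{A}(\mathbf{y})=\{\tilde{\mathbf{y}}\in[K]^m:\|\tilde{\mathbf{y}}-\mathbf{y}\|_0\le\lfloor\epsilon m\rfloor\}$. *)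

theory Defs
  imports Main "HOL-Library.Disjoint_Sets" Complex_Main
begin

text \<open>Indices of labeled nodes are the naturals i < m; vectors are functions nat => real
  (only the first m entries matter). Classes are [K] = {1..K}.\<close>

definition binlab :: "(nat \<Rightarrow> nat) \<Rightarrow> nat \<Rightarrow> nat \<Rightarrow> real" where
  "binlab y c i = (if y i = c then 1 else -1)"

definition svm_obj :: "nat \<Rightarrow> (nat \<Rightarrow> nat \<Rightarrow> real) \<Rightarrow> (nat \<Rightarrow> real) \<Rightarrow> (nat \<Rightarrow> real) \<Rightarrow> real" where
  "svm_obj m Q w \<alpha> = - (\<Sum>i<m. \<alpha> i) + 1/2 * (\<Sum>i<m. \<Sum>j<m. w i * w j * \<alpha> i * \<alpha> j * Q i j)"

definition svm_box :: "nat \<Rightarrow> real \<Rightarrow> (nat \<Rightarrow> real) \<Rightarrow> bool" where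
  "svm_box m C \<alpha> \<longleftrightarrow> (\<forall>i<m. 0 \<le> \<alpha> i \<and> \<alpha> i \<le> C)"

definition svm_sol :: "nat \<Rightarrow> real \<Rightarrow> (nat \<Rightarrow> nat \<Rightarrow> real) \<Rightarrow> (nat \<Rightarrow> real) \<Rightarrow> (nat \<Rightarrow> real) set" where
  "svm_sol m C Q w = {\<alpha>. svm_box m C \<alpha> \<and> (\<forall>\<beta>. svm_box m C \<beta> \<longrightarrow> svm_obj m Q w \<alpha> \<le> svm_obj m Q w \<beta>)}"

definition svm_score :: "nat \<Rightarrow> (nat \<Rightarrow> real) \<Rightarrow> (nat \<Rightarrow> real) \<Rightarrow> (nat \<Rightarrow> real) \<Rightarrow> real" where
  "svm_score m Qt w \<alpha> = (\<Sum>i<m. w i * \<alpha> i * Qt i)"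

definition adv_set :: "nat \<Rightarrow> nat \<Rightarrow> real \<Rightarrow> (nat \<Rightarrow> nat) \<Rightarrow> (nat \<Rightarrow> nat) set" where
  "adv_set m K eps y = {yt. (\<forall>i<m. yt i \<in> {1..K}) \<and>
      card {i. i < m \<and> yt i \<noteq> y i} \<le> nat \<lfloor>eps * real m\<rfloor>}"

definition bigMu :: "nat \<Rightarrow> real \<Rightarrow> (nat \<Rightarrow> nat \<Rightarrow> real) \<Rightarrow> nat \<Rightarrow> real" where
  "bigMu m C Q i = (\<Sum>j<m. C * \<bar>Q i j\<bar>) - 1"

definition bigMv :: "nat \<Rightarrow> real \<Rightarrow> (nat \<Rightarrow> nat \<Rightarrow> real) \<Rightarrow> nat \<Rightarrow> real" where
  "bigMv m C Q i = (\<Sum>j<m. C * \<bar>Q i j\<bar>) + 1"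

definition milp_feasible ::
  "nat \<Rightarrow> real \<Rightarrow> (nat \<Rightarrow> nat \<Rightarrow> real) \<Rightarrow> (nat \<Rightarrow> real) \<Rightarrow> nat \<Rightarrow>
   (nat \<Rightarrow> real) \<Rightarrow> (nat \<Rightarrow> real) \<Rightarrow> (nat \<Rightarrow> real) \<Rightarrow> (nat \<Rightarrow> real) \<Rightarrow> (nat \<Rightarrow> real) \<Rightarrow>
   (nat \<Rightarrow> real) \<Rightarrow> (nat \<Rightarrow> real) \<Rightarrow> (nat \<Rightarrow> real) \<Rightarrow> (nat \<Rightarrow> nat \<Rightarrow> real) \<Rightarrow> bool" where
  "milp_feasible m C Q yb B \<alpha> yt z u v yp s t R \<longleftrightarrow>
     (\<Sum>i<m. 1 - yb i * yt i) \<le> 2 * real B \<and>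
     (\<forall>i<m. yp i \<in> {0,1} \<and> s i \<in> {0,1} \<and> t i \<in> {0,1}) \<and>
     (\<forall>i<m.
        yt i = 2 * yp i - 1 \<and>
        (\<Sum>j<m. R i j * Q i j) - 1 - u i + v i = 0 \<and>
        u i \<ge> 0 \<and> v i \<ge> 0 \<and>
        - \<alpha> i \<le> z i \<and> z i \<le> \<alpha> i \<and>
        \<alpha> i - C * (1 - yt i) \<le> z i \<and> z i \<le> C * (1 + yt i) - \<alpha> i \<and>
        u i \<le> bigMu m C Q i * s i \<and> \<alpha> i \<le> C * (1 - s i) \<and>
        v i \<le> bigMv m C Q i * t i \<and> \<alpha> i \<ge> C * t i) \<and>
     (\<forall>i<m. \<forall>j<m.
        - C * (1 + yt i) \<le> R i j + z j \<and> R i j + z j \<le> C * (1 + yt i) \<and>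
        - C * (1 - yt i) \<le> R i j - z j \<and> R i j - z j \<le> C * (1 - yt i))"

definition milp_vals ::
  "nat \<Rightarrow> real \<Rightarrow> (nat \<Rightarrow> nat \<Rightarrow> real) \<Rightarrow> (nat \<Rightarrow> real) \<Rightarrow> (nat \<Rightarrow> real) \<Rightarrow> nat \<Rightarrow> real set" where
  "milp_vals m C Q Qt yb B = {(\<Sum>i<m. z i * Qt i) | \<alpha> yt z u v yp s t R.
      milp_feasible m C Q yb B \<alpha> yt z u v yp s t R}"

definition milp_min :: "nat \<Rightarrow> real \<Rightarrow> (nat \<Rightarrow> nat \<Rightarrow> real) \<Rightarrow> (nat \<Rightarrow> real) \<Rightarrow> (nat \<Rightarrow> real) \<Rightarrow> nat \<Rightarrow> real" where
  "milp_min m C Q Qt yb B = Inf (milp_vals m C Q Qt yb B)"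

definition milp_max :: "nat \<Rightarrow> real \<Rightarrow> (nat \<Rightarrow> nat \<Rightarrow> real) \<Rightarrow> (nat \<Rightarrow> real) \<Rightarrow> (nat \<Rightarrow> real) \<Rightarrow> nat \<Rightarrow> real" where
  "milp_max m C Q Qt yb B = Sup (milp_vals m C Q Qt yb B)"

end

theory Submission
  imports Defs
begin

lemma sum_delta_mult:
  fixes f :: "nat \<Rightarrow> real"
  assumes "k < m"
  shows "(\<Sum>i<m. (if i = k then 1 else 0) * f i) = f k"
proof -
  have "(\<Sum>i<m. (if i = k then 1 else 0) * f i) = (\<Sum>i<m. if i = k then f i else 0)"
    by (intro sum.cong) auto
  also have "\<dots> = f k" using assms by (simp add: sum.delta)
  finally show ?thesis .
qed

lemma obj_expand:
  fixes Q :: "nat \<Rightarrow> nat \<Rightarrow> real"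
  assumes sym: "\<forall>i<m. \<forall>j<m. Q i j = Q j i" and k: "k < m" and wk: "w k * w k = 1"
  shows "svm_obj m Q w (\<lambda>i. \<alpha> i + h * (if i = k then 1 else 0)) =
    svm_obj m Q w \<alpha> + h * ((\<Sum>j<m. w k * w j * \<alpha> j * Q k j) - 1) + h^2 / 2 * Q k k"
proof -
  define d :: "nat \<Rightarrow> real" where "d i = (if i = k then 1 else 0)" for i
  have lin: "(\<Sum>i<m. \<alpha> i + h * d i) = (\<Sum>i<m. \<alpha> i) + h"
    using k by (simp add: sum.distrib d_def flip: sum_distrib_left)
  have quad: "(\<Sum>i<m. \<Sum>j<m. w i * w j * (\<alpha> i + h * d i) * (\<alpha> j + h * d j) * Q i j)
     = (\<Sum>i<m. \<Sum>j<m. w i * w j * \<alpha> i * \<alpha> j * Q i j)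
       + h * (\<Sum>i<m. \<Sum>j<m. d i * (w i * w j * \<alpha> j * Q i j))
       + h * (\<Sum>i<m. \<Sum>j<m. d j * (w i * w j * \<alpha> i * Q i j))
       + h^2 * (\<Sum>i<m. \<Sum>j<m. d i * (d j * (w i * w j * Q i j)))"
    by (simp add: sum.distrib sum_distrib_left algebra_simps power2_eq_square)
  have c1: "(\<Sum>i<m. \<Sum>j<m. d i * (w i * w j * \<alpha> j * Q i j)) = (\<Sum>j<m. w k * w j * \<alpha> j * Q k j)"
    using k by (simp add: d_def sum_delta_mult flip: sum_distrib_left)
  have c2: "(\<Sum>i<m. \<Sum>j<m. d j * (w i * w j * \<alpha> i * Q i j)) = (\<Sum>i<m. w i * w k * \<alpha> i * Q i k)"
    using k by (simp add: d_def sum_delta_mult sum_distrib_left[symmetric] flip: sum.swap[of _ "{..<m}"])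
  also have "\<dots> = (\<Sum>j<m. w k * w j * \<alpha> j * Q k j)"
    using sym k by (intro sum.cong) (auto simp: mult_ac)
  finally have c2': "(\<Sum>i<m. \<Sum>j<m. d j * (w i * w j * \<alpha> i * Q i j)) = (\<Sum>j<m. w k * w j * \<alpha> j * Q k j)" .
  have c3: "(\<Sum>i<m. \<Sum>j<m. d i * (d j * (w i * w j * Q i j))) = Q k k"
    using k wk by (simp add: d_def sum_delta_mult flip: sum_distrib_left)
  show ?thesis
    unfolding svm_obj_def d_def[symmetric] lin quad c1 c2' c3
    by (simp add: algebra_simps)
qed
lemma kkt:
  fixes Q :: "nat \<Rightarrow> nat \<Rightarrow> real"
  assumes sym: "\<forall>i<m. \<forall>j<m. Q i j = Q j i" and k: "k < m" and wk: "w k * w k = 1"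
    and sol: "\<alpha> \<in> svm_sol m C Q w"
  shows "(\<Sum>j<m. w k * w j * \<alpha> j * Q k j) > 1 \<Longrightarrow> \<alpha> k = 0"
    and "(\<Sum>j<m. w k * w j * \<alpha> j * Q k j) < 1 \<Longrightarrow> \<alpha> k = C"
proof -
  define g where "g = (\<Sum>j<m. w k * w j * \<alpha> j * Q k j)"
  have box: "svm_box m C \<alpha>" and opt: "\<And>\<beta>. svm_box m C \<beta> \<Longrightarrow> svm_obj m Q w \<alpha> \<le> svm_obj m Q w \<beta>"
    using sol by (auto simp: svm_sol_def)
  have ak: "0 \<le> \<alpha> k" "\<alpha> k \<le> C" using box k by (auto simp: svm_box_def)
  define \<beta> where "\<beta> h = (\<lambda>i. \<alpha> i + h * (if i = k then 1 else 0))" for h :: real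
  have ob: "svm_obj m Q w (\<beta> h) = svm_obj m Q w \<alpha> + h * (g - 1) + h^2 / 2 * Q k k" for h
    unfolding \<beta>_def g_def using obj_expand[of m Q k w, OF sym k wk] by simp
  have bb: "svm_box m C (\<beta> h)" if "0 \<le> \<alpha> k + h" "\<alpha> k + h \<le> C" for h
    using box that unfolding svm_box_def \<beta>_def by auto
  show "g > 1 \<Longrightarrow> \<alpha> k = 0" unfolding g_def[symmetric]
  proof (rule ccontr)
    assume g1: "g > 1" and nz: "\<alpha> k \<noteq> 0"
    define a where "a = min (\<alpha> k) ((g - 1) / (\<bar>Q k k\<bar> + 1))"
    have apos: "a > 0" using nz ak g1 by (auto simp: a_def)
    have a1: "a \<le> \<alpha> k" by (simp add: a_def)
    have a2: "a * (\<bar>Q k k\<bar> + 1) \<le> g - 1"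
      unfolding a_def by (smt (verit) abs_ge_zero min.cobounded2 pos_le_divide_eq)
    have "a * \<bar>Q k k\<bar> < g - 1" using a2 apos by (simp add: algebra_simps)
    hence "a * (a * \<bar>Q k k\<bar>) < a * (g - 1)" using apos by simp
    moreover have "a^2 / 2 * Q k k \<le> a * (a * \<bar>Q k k\<bar>)"
      using apos by (simp add: power2_eq_square)
    ultimately have "(-a) * (g - 1) + (-a)^2 / 2 * Q k k < 0" by simp
    hence "svm_obj m Q w (\<beta> (-a)) < svm_obj m Q w \<alpha>" using ob[of "-a"] by simp
    moreover have "svm_box m C (\<beta> (-a))" using a1 ak apos by (intro bb) auto
    ultimately show False using opt by fastforce
  qed
  show "g < 1 \<Longrightarrow> \<alpha> k = C" unfolding g_def[symmetric]
  proof (rule ccontr)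
    assume g1: "g < 1" and nz: "\<alpha> k \<noteq> C"
    define a where "a = min (C - \<alpha> k) ((1 - g) / (\<bar>Q k k\<bar> + 1))"
    have apos: "a > 0" using nz ak g1 by (auto simp: a_def)
    have a1: "a \<le> C - \<alpha> k" by (simp add: a_def)
    have a2: "a * (\<bar>Q k k\<bar> + 1) \<le> 1 - g"
      unfolding a_def by (smt (verit) abs_ge_zero min.cobounded2 pos_le_divide_eq)
    have "a * \<bar>Q k k\<bar> < 1 - g" using a2 apos by (simp add: algebra_simps)
    hence "a * (a * \<bar>Q k k\<bar>) < a * (1 - g)" using apos by simp
    moreover have "a^2 / 2 * Q k k \<le> a * (a * \<bar>Q k k\<bar>)"
      using apos by (simp add: power2_eq_square)
    ultimately have "a * (g - 1) + a^2 / 2 * Q k k < 0" by (simp add: algebra_simps)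
    hence "svm_obj m Q w (\<beta> a) < svm_obj m Q w \<alpha>" using ob[of a] by simp
    moreover have "svm_box m C (\<beta> a)" using a1 ak apos by (intro bb) auto
    ultimately show False using opt by fastforce
  qed
qed

lemma vals_bound:
  assumes C: "C > 0" and x: "x \<in> milp_vals m C Q Qt yb B"
  shows "\<bar>x\<bar> \<le> (\<Sum>i<m. C * \<bar>Qt i\<bar>)"
proof -
  obtain \<alpha> yt z u v yp s t R where x: "x = (\<Sum>i<m. z i * Qt i)"
    and f: "milp_feasible m C Q yb B \<alpha> yt z u v yp s t R"
    using x unfolding milp_vals_def by blast
  have zb: "\<bar>z i\<bar> \<le> C" if "i < m" for i
  proof -
    have "- \<alpha> i \<le> z i" "z i \<le> \<alpha> i" "\<alpha> i \<le> C * (1 - s i)" "s i \<in> {0,1}"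
      using f that unfolding milp_feasible_def by auto
    thus ?thesis using C by auto
  qed
  have "\<bar>x\<bar> \<le> (\<Sum>i<m. \<bar>z i * Qt i\<bar>)" unfolding x by (rule sum_abs)
  also have "\<dots> \<le> (\<Sum>i<m. C * \<bar>Qt i\<bar>)"
    using zb by (intro sum_mono) (simp add: abs_mult mult_right_mono)
  finally show ?thesis .
qed

lemma feasible_point:
  fixes Q :: "nat \<Rightarrow> nat \<Rightarrow> real"
  assumes C: "C > 0" and sym: "\<forall>i<m. \<forall>j<m. Q i j = Q j i"
    and card: "card {i. i < m \<and> yt i \<noteq> y i} \<le> B"
    and sol: "\<alpha> \<in> svm_sol m C Q (binlab yt c)"
  shows "svm_score m Qt (binlab yt c) \<alpha> \<in> milp_vals m C Q Qt (binlab y c) B"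
proof -
  define w where "w = binlab yt c"
  define yb where "yb = binlab y c"
  have w01: "w i = 1 \<or> w i = -1" for i by (simp add: w_def binlab_def)
  have ww: "w i * w i = 1" for i using w01[of i] by auto
  define g where "g i = (\<Sum>j<m. w i * w j * \<alpha> j * Q i j)" for i
  have box: "\<forall>i<m. 0 \<le> \<alpha> i \<and> \<alpha> i \<le> C" using sol by (simp add: svm_sol_def svm_box_def)
  have k1: "g i > 1 \<Longrightarrow> \<alpha> i = 0" if "i < m" for i
    using kkt(1)[OF sym that ww sol[folded w_def]] by (simp add: g_def)
  have k2: "g i < 1 \<Longrightarrow> \<alpha> i = C" if "i < m" for i
    using kkt(2)[OF sym that ww sol[folded w_def]] by (simp add: g_def)
  have gb: "\<bar>g i\<bar> \<le> (\<Sum>j<m. C * \<bar>Q i j\<bar>)" if "i < m" for i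
  proof -
    have "\<bar>g i\<bar> \<le> (\<Sum>j<m. \<bar>w i * w j * \<alpha> j * Q i j\<bar>)" unfolding g_def by (rule sum_abs)
    also have "\<dots> \<le> (\<Sum>j<m. C * \<bar>Q i j\<bar>)"
    proof (intro sum_mono)
      fix j assume "j \<in> {..<m}"
      hence "0 \<le> \<alpha> j" "\<alpha> j \<le> C" using box by auto
      moreover have "\<bar>w i * w j\<bar> = 1" using w01[of i] w01[of j] by auto
      ultimately show "\<bar>w i * w j * \<alpha> j * Q i j\<bar> \<le> C * \<bar>Q i j\<bar>"
        by (simp add: abs_mult mult_right_mono)
    qed
    finally show ?thesis .
  qed
  define z where "z i = w i * \<alpha> i" for i
  define u where "u i = max (g i - 1) 0" for i
  define v where "v i = max (1 - g i) 0" for i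
  define yp where "yp i = (w i + 1) / 2" for i
  define s where "s i = (if g i > 1 then 1 else 0 :: real)" for i
  define t where "t i = (if g i < 1 then 1 else 0 :: real)" for i
  define R where "R i j = w i * z j" for i j
  have budget: "(\<Sum>i<m. 1 - yb i * w i) \<le> 2 * real B"
  proof -
    have "(\<Sum>i<m. 1 - yb i * w i) \<le> (\<Sum>i<m. if yt i \<noteq> y i then 2 else 0)"
      by (intro sum_mono) (auto simp: yb_def w_def binlab_def)
    also have "\<dots> = (\<Sum>i\<in>{i\<in>{..<m}. yt i \<noteq> y i}. 2)"
      by (rule sum.inter_filter[symmetric]) simp
    also have "{i\<in>{..<m}. yt i \<noteq> y i} = {i. i < m \<and> yt i \<noteq> y i}" by auto
    also have "(\<Sum>i\<in>{i. i < m \<and> yt i \<noteq> y i}. (2::real)) = 2 * real (card {i. i < m \<and> yt i \<noteq> y i})"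
      by simp
    also have "\<dots> \<le> 2 * real B" using card by simp
    finally show ?thesis .
  qed
  have Rg: "(\<Sum>j<m. R i j * Q i j) = g i" for i
    unfolding R_def z_def g_def by (simp add: mult_ac)
  have feas: "milp_feasible m C Q yb B \<alpha> w z u v yp s t R"
    unfolding milp_feasible_def
  proof (intro conjI allI impI)
    show "(\<Sum>i<m. 1 - yb i * w i) \<le> 2 * real B" by (rule budget)
  next
    fix i assume i: "i < m"
    show "yp i \<in> {0,1}" using w01[of i] by (auto simp: yp_def)
    show "s i \<in> {0,1}" by (auto simp: s_def)
    show "t i \<in> {0,1}" by (auto simp: t_def)
    have a: "0 \<le> \<alpha> i" "\<alpha> i \<le> C" using box i by auto
    note k1i = k1[OF i] and k2i = k2[OF i] and gbi = gb[OF i]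
    show "w i = 2 * yp i - 1" by (simp add: yp_def field_simps)
    show "(\<Sum>j<m. R i j * Q i j) - 1 - u i + v i = 0" unfolding Rg by (simp add: u_def v_def)
    show "u i \<ge> 0" "v i \<ge> 0" by (auto simp: u_def v_def)
    show "- \<alpha> i \<le> z i" "z i \<le> \<alpha> i" "\<alpha> i - C * (1 - w i) \<le> z i" "z i \<le> C * (1 + w i) - \<alpha> i"
      using w01[of i] a by (auto simp: z_def)
    show "u i \<le> bigMu m C Q i * s i" using gbi by (auto simp: u_def s_def bigMu_def)
    show "\<alpha> i \<le> C * (1 - s i)" using a k1i by (auto simp: s_def)
    show "v i \<le> bigMv m C Q i * t i" using gbi by (auto simp: v_def t_def bigMv_def)
    show "\<alpha> i \<ge> C * t i" using a k2i by (auto simp: t_def)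
  next
    fix i j assume i: "i < m" and j: "j < m"
    have a: "0 \<le> \<alpha> j" "\<alpha> j \<le> C" using box j by auto
    show "- C * (1 + w i) \<le> R i j + z j" "R i j + z j \<le> C * (1 + w i)"
         "- C * (1 - w i) \<le> R i j - z j" "R i j - z j \<le> C * (1 - w i)"
      using w01[of i] w01[of j] a by (auto simp: R_def z_def)
  qed
  have "svm_score m Qt w \<alpha> = (\<Sum>i<m. z i * Qt i)"
    by (simp add: svm_score_def z_def)
  thus ?thesis using feas unfolding milp_vals_def w_def[symmetric] yb_def[symmetric] by blast
qed

theorem mainTheorem7:
  fixes K m :: nat and C eps :: real and Q :: "nat \<Rightarrow> nat \<Rightarrow> real" and Qt :: "nat \<Rightarrow> real"
    and y :: "nat \<Rightarrow> nat" and chat :: nat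
  assumes C_pos: "C > 0"
    and Q_sym: "\<forall>i<m. \<forall>j<m. Q i j = Q j i"
    and Q_psd: "\<forall>x :: nat \<Rightarrow> real. (\<Sum>i<m. \<Sum>j<m. x i * x j * Q i j) \<ge> 0"
    and y_lab: "\<forall>i<m. y i \<in> {1..K}"
    and chat_cls: "chat \<in> {1..K}"
    and chat_pred: "\<exists>\<alpha> :: nat \<Rightarrow> nat \<Rightarrow> real.
        (\<forall>c\<in>{1..K}. \<alpha> c \<in> svm_sol m C Q (binlab y c)) \<and>
        (\<forall>c\<in>{1..K}. svm_score m Qt (binlab y c) (\<alpha> c) \<le> svm_score m Qt (binlab y chat) (\<alpha> chat))"
    and cert: "\<forall>c\<in>{1..K}. c \<noteq> chat \<longrightarrow>
        milp_min m C Q Qt (binlab y chat) (nat \<lfloor>eps * real m\<rfloor>)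
          > milp_max m C Q Qt (binlab y c) (nat \<lfloor>eps * real m\<rfloor>)"
  shows "\<forall>yt \<in> adv_set m K eps y. \<forall>\<alpha> :: nat \<Rightarrow> nat \<Rightarrow> real.
           (\<forall>c\<in>{1..K}. \<alpha> c \<in> svm_sol m C Q (binlab yt c)) \<longrightarrow>
           (\<forall>c\<in>{1..K}. c \<noteq> chat \<longrightarrow>
              svm_score m Qt (binlab yt chat) (\<alpha> chat) - svm_score m Qt (binlab yt c) (\<alpha> c) > 0)"
proof (intro ballI allI impI)
  fix yt \<alpha> c
  assume yt: "yt \<in> adv_set m K eps y"
    and sols: "\<forall>c\<in>{1..K}. \<alpha> c \<in> svm_sol m C Q (binlab yt c)"
    and c: "c \<in> {1..K}" and cne: "c \<noteq> chat"
  define B where "B = nat \<lfloor>eps * real m\<rfloor>"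
  have card: "card {i. i < m \<and> yt i \<noteq> y i} \<le> B" using yt by (simp add: adv_set_def B_def)
  have in1: "svm_score m Qt (binlab yt chat) (\<alpha> chat) \<in> milp_vals m C Q Qt (binlab y chat) B"
    using feasible_point[OF C_pos Q_sym card] sols chat_cls by blast
  have in2: "svm_score m Qt (binlab yt c) (\<alpha> c) \<in> milp_vals m C Q Qt (binlab y c) B"
    using feasible_point[OF C_pos Q_sym card] sols c by blast
  have bb: "bdd_below (milp_vals m C Q Qt (binlab y chat) B)"
    unfolding bdd_below_def using vals_bound[OF C_pos] by (metis abs_le_iff minus_le_iff)
  have ba: "bdd_above (milp_vals m C Q Qt (binlab y c) B)"
    unfolding bdd_above_def using vals_bound[OF C_pos] by (metis abs_le_iff)
  have "milp_min m C Q Qt (binlab y chat) B \<le> svm_score m Qt (binlab yt chat) (\<alpha> chat)"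
    unfolding milp_min_def by (rule cInf_lower[OF in1 bb])
  moreover have "svm_score m Qt (binlab yt c) (\<alpha> c) \<le> milp_max m C Q Qt (binlab y c) B"
    unfolding milp_max_def by (rule cSup_upper[OF in2 ba])
  moreover have "milp_min m C Q Qt (binlab y chat) B > milp_max m C Q Qt (binlab y c) B"
    using cert c cne by (simp add: B_def)
  ultimately show "svm_score m Qt (binlab yt chat) (\<alpha> chat) - svm_score m Qt (binlab yt c) (\<alpha> c) > 0"
    by linarith
qed

end
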